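(* Consider the planar system $$\frac{dN}{dt}=rN\left(1-\frac{N}{K}-\frac{h}{w+N}\right)-\frac{aNP}{b+N^2},\qquad \frac{dP}{dt}=\frac{cNP}{b+N^2}-\delta P,$$ where $r,K,h,w,a,b,c,\delta$ are positive constants with $w<K$, and suppose the Allee effect is weak, i.e. $h<w$. Let $$N_1=\frac{(K-w)+\sqrt{(K-w)^2-4K(h-w)}}{2}$$ and $E_1=(N_1,0)$. Then $E_1$ is locally asymptotically stable if $c<\frac{\delta(b+N_1^2)}{N_1}$, and unstable (a saddle) if $c>\frac{\delta(b+N_1^2)}{N_1}$.
   Context: $N(t)$ is the prey density and $P(t)$ the predator density. $E_1$ is the (unique) predator-free equilibrium with positive prey density in the weak Allee case. *)

theory Defs
  imports "HOL-Analysis.Analysis"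
begin

definition pp_field :: "real \<Rightarrow> real \<Rightarrow> real \<Rightarrow> real \<Rightarrow> real \<Rightarrow> real \<Rightarrow> real \<Rightarrow> real
    \<Rightarrow> real \<times> real \<Rightarrow> real \<times> real" where
  "pp_field r K h w a b c \<delta> = (\<lambda>(N, P).
     (r * N * (1 - N / K - h / (w + N)) - a * N * P / (b + N^2),
      c * N * P / (b + N^2) - \<delta> * P))"

definition solution_on :: "('a::real_normed_vector \<Rightarrow> 'a) \<Rightarrow> (real \<Rightarrow> 'a) \<Rightarrow> real set \<Rightarrow> bool" where
  "solution_on F x I \<longleftrightarrow> (\<forall>t\<in>I. (x has_vector_derivative F (x t)) (at t within I))"

text \<open>Lyapunov stability: for every solution on any forward interval [0,T].\<close>
definition lyapunov_stable :: "('a::real_normed_vector \<Rightarrow> 'a) \<Rightarrow> 'a \<Rightarrow> bool" where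
  "lyapunov_stable F E \<longleftrightarrow>
     (\<forall>\<epsilon>>0. \<exists>d>0. \<forall>x T. 0 \<le> T \<longrightarrow> solution_on F x {0..T} \<longrightarrow> dist (x 0) E < d
        \<longrightarrow> (\<forall>t\<in>{0..T}. dist (x t) E < \<epsilon>))"

definition locally_attractive :: "('a::real_normed_vector \<Rightarrow> 'a) \<Rightarrow> 'a \<Rightarrow> bool" where
  "locally_attractive F E \<longleftrightarrow>
     (\<exists>\<eta>>0. \<forall>x. solution_on F x {0..} \<longrightarrow> dist (x 0) E < \<eta> \<longrightarrow> (x \<longlongrightarrow> E) at_top)"

definition locally_asymptotically_stable :: "('a::real_normed_vector \<Rightarrow> 'a) \<Rightarrow> 'a \<Rightarrow> bool" where
  "locally_asymptotically_stable F E \<longleftrightarrow>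
     F E = 0 \<and> lyapunov_stable F E \<and> locally_attractive F E"

text \<open>Saddle: equilibrium whose linearisation has a negative and a positive real eigenvalue
  (planar case).\<close>
definition is_saddle :: "('a::real_normed_vector \<Rightarrow> 'a) \<Rightarrow> 'a \<Rightarrow> bool" where
  "is_saddle F E \<longleftrightarrow> F E = 0 \<and> (\<exists>J. (F has_derivative J) (at E) \<and>
     (\<exists>l1 l2 v1 v2. l1 < 0 \<and> 0 < l2 \<and> v1 \<noteq> 0 \<and> v2 \<noteq> 0 \<and>
        J v1 = l1 *\<^sub>R v1 \<and> J v2 = l2 *\<^sub>R v2))"

end

theory Submission
  imports Defs
begin

lemma exp_integral:
  fixes L c :: real assumes "0 < L" "0 \<le> c"
  shows "integral {0..c} (\<lambda>s. exp (2*L* s)) = (exp (2*L*c) - 1) / (2*L)"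
proof -
  have "((\<lambda>s. exp (2*L* s)) has_integral ((\<lambda>s. exp (2*L* s) / (2*L)) c - (\<lambda>s. exp (2*L* s) / (2*L)) 0)) {0..c}"
  proof (rule fundamental_theorem_of_calculus[OF assms(2)])
    fix x assume "x \<in> {0..c}"
    have "((\<lambda>s. exp (2*L* s) / (2*L)) has_real_derivative (exp (2*L*x) * (2*L) / (2*L))) (at x within {0..c})"
      by (intro derivative_eq_intros) (use assms in auto)
    then show "((\<lambda>s. exp (2*L* s) / (2*L)) has_vector_derivative exp (2*L*x)) (at x within {0..c})"
      using assms by (simp add: has_real_derivative_iff_has_vector_derivative)
  qed
  then show ?thesis using integral_unique by (simp add: diff_divide_distrib)
qed

lemma picard_exists:
  fixes G :: "'a::banach \<Rightarrow> 'a"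
  assumes L: "0 < L" and lip: "\<And>x y. norm (G x - G y) \<le> L * norm (x - y)" and T: "0 \<le> T"
  shows "\<exists>y. y 0 = x0 \<and> solution_on G y {0..T}"
proof -
  have "L-lipschitz_on UNIV G" by (rule lipschitz_onI) (use lip L in \<open>auto simp: dist_norm\<close>)
  then have contG: "continuous_on UNIV G" by (rule lipschitz_on_continuous_on)
  define ct where "ct t = max 0 (min T t)" for t :: real
  have ct_in: "ct t \<in> {0..T}" for t using T by (auto simp: ct_def)
  have ct_id: "t \<in> {0..T} \<Longrightarrow> ct t = t" for t by (auto simp: ct_def)
  have contct: "continuous_on UNIV ct" unfolding ct_def by (intro continuous_intros)
  define Gz where "Gz z s = G (exp (2*L* s) *\<^sub>R apply_bcontfun z s)" for z :: "real \<Rightarrow>\<^sub>C 'a" and s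
  have contGz: "continuous_on S (Gz z)" for z S
    unfolding Gz_def
    by (rule continuous_on_compose2[OF contG]) (auto intro!: continuous_intros)
  have intGz: "Gz z integrable_on {0..c}" for z c
    by (rule integrable_continuous_interval[OF contGz])
  define H where "H z u = exp (-(2*L*u)) *\<^sub>R (x0 + integral {0..u} (Gz z))" for z u
  have contH: "continuous_on {0..T} (H z)" for z
    unfolding H_def
    by (intro continuous_intros indefinite_integral_continuous_1 intGz)
  define Psi where "Psi z t = H z (ct t)" for z t
  have Psi_bc: "Psi z \<in> bcontfun" for z
  proof -
    have c1: "continuous_on UNIV (Psi z)"
      unfolding Psi_def by (rule continuous_on_compose2[OF contH[of z] contct]) (use ct_in in auto)
    have "compact (H z ` {0..T})" by (rule compact_continuous_image[OF contH]) simp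
    then obtain B where B: "\<And>v. v \<in> H z ` {0..T} \<Longrightarrow> norm v \<le> B"
      using compact_imp_bounded bounded_iff by metis
    show ?thesis
      by (rule bcontfun_normI[OF c1, of B]) (use B ct_in in \<open>auto simp: Psi_def\<close>)
  qed
  define Phi where "Phi z = Bcontfun (Psi z)" for z
  have Phi_app: "apply_bcontfun (Phi z) t = Psi z t" for z t
    unfolding Phi_def using Psi_bc by (simp add: Bcontfun_inverse)
  have contr: "dist (Phi z1) (Phi z2) \<le> 1/2 * dist z1 z2" for z1 z2
  proof (rule dist_bound)
    fix t
    define c where "c = ct t"
    define D where "D = dist z1 z2"
    have c0: "0 \<le> c" using ct_in by (auto simp: c_def)
    have D0: "0 \<le> D" by (simp add: D_def)
    have "Psi z1 t - Psi z2 t = exp (-(2*L*c)) *\<^sub>R (integral {0..c} (Gz z1) - integral {0..c} (Gz z2))"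
      by (simp add: Psi_def H_def c_def algebra_simps)
    also have "\<dots> = exp (-(2*L*c)) *\<^sub>R integral {0..c} (\<lambda>s. Gz z1 s - Gz z2 s)"
      by (simp add: integral_diff intGz)
    finally have eq: "Psi z1 t - Psi z2 t = exp (-(2*L*c)) *\<^sub>R integral {0..c} (\<lambda>s. Gz z1 s - Gz z2 s)" .
    have bnd: "norm (Gz z1 s - Gz z2 s) \<le> L * D * exp (2*L* s)" for s
    proof -
      have "norm (Gz z1 s - Gz z2 s) \<le> L * norm (exp (2*L* s) *\<^sub>R apply_bcontfun z1 s - exp (2*L* s) *\<^sub>R apply_bcontfun z2 s)"
        unfolding Gz_def by (rule lip)
      also have "\<dots> = L * exp (2*L* s) * dist (apply_bcontfun z1 s) (apply_bcontfun z2 s)"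
        by (simp add: dist_norm flip: scaleR_diff_right)
      also have "\<dots> \<le> L * exp (2*L* s) * D"
        unfolding D_def using L by (intro mult_left_mono dist_bounded) auto
      finally show ?thesis by (simp add: mult_ac)
    qed
    have "norm (integral {0..c} (\<lambda>s. Gz z1 s - Gz z2 s)) \<le> integral {0..c} (\<lambda>s. L * D * exp (2*L* s))"
      by (rule integral_norm_bound_integral)
        (auto intro!: integrable_diff intGz integrable_continuous_interval continuous_intros bnd contGz)
    also have "\<dots> = L * D * ((exp (2*L*c) - 1) / (2*L))"
      using exp_integral[OF L c0] by simp
    also have "\<dots> = D * (exp (2*L*c) - 1) / 2" using L by (simp add: field_simps)
    finally have n1: "norm (integral {0..c} (\<lambda>s. Gz z1 s - Gz z2 s)) \<le> D * (exp (2*L*c) - 1) / 2" .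
    have "dist (apply_bcontfun (Phi z1) t) (apply_bcontfun (Phi z2) t) = exp (-(2*L*c)) * norm (integral {0..c} (\<lambda>s. Gz z1 s - Gz z2 s))"
      by (simp add: Phi_app dist_norm eq)
    also have "\<dots> \<le> exp (-(2*L*c)) * (D * (exp (2*L*c) - 1) / 2)"
      by (rule mult_left_mono[OF n1]) simp
    also have "\<dots> = D/2 - D * exp (-(2*L*c)) / 2"
      by (simp add: field_simps exp_minus)
    also have "\<dots> \<le> 1/2 * dist z1 z2" using D0 by (simp add: D_def)
    finally show "dist (apply_bcontfun (Phi z1) t) (apply_bcontfun (Phi z2) t) \<le> 1/2 * dist z1 z2" .
  qed
  obtain z where fz: "Phi z = z"
    using banach_fix_type[of "1/2" Phi] contr by auto
  define y where "y t = x0 + integral {0..t} (Gz z)" for t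
  have zy: "exp (2*L*t) *\<^sub>R apply_bcontfun z t = y t" if "t \<in> {0..T}" for t
  proof -
    have "apply_bcontfun z t = Psi z t" using fz Phi_app by metis
    also have "\<dots> = exp (-(2*L*t)) *\<^sub>R y t" using ct_id[OF that] by (simp add: Psi_def H_def y_def)
    finally show ?thesis by (simp add: exp_minus)
  qed
  have "solution_on G y {0..T}"
    unfolding solution_on_def
  proof
    fix t assume t: "t \<in> {0..T}"
    have "((\<lambda>u. integral {0..u} (Gz z)) has_vector_derivative Gz z t) (at t within {0..T})"
      by (rule integral_has_vector_derivative[OF contGz t])
    then have "(y has_vector_derivative Gz z t) (at t within {0..T})"
      unfolding y_def by (intro derivative_eq_intros) auto
    moreover have "Gz z t = G (y t)" using zy[OF t] by (simp add: Gz_def)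
    ultimately show "(y has_vector_derivative G (y t)) (at t within {0..T})" by simp
  qed
  moreover have "y 0 = x0" by (simp add: y_def)
  ultimately show ?thesis by blast
qed


lemma vd_fst:
  fixes x :: "real \<Rightarrow> real \<times> real"
  assumes "(x has_vector_derivative v) F"
  shows "((\<lambda>t. fst (x t)) has_real_derivative fst v) F"
proof -
  have "((\<lambda>t. fst (x t)) has_derivative (\<lambda>h. fst (h *\<^sub>R v))) F"
    using has_derivative_fst[OF assms[unfolded has_vector_derivative_def]] .
  moreover have "(\<lambda>h. h * fst v) = (*) (fst v)" by (rule ext) simp
  ultimately show ?thesis by (simp add: has_field_derivative_def)
qed

lemma vd_snd:
  fixes x :: "real \<Rightarrow> real \<times> real"
  assumes "(x has_vector_derivative v) F"
  shows "((\<lambda>t. snd (x t)) has_real_derivative snd v) F"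
proof -
  have "((\<lambda>t. snd (x t)) has_derivative (\<lambda>h. snd (h *\<^sub>R v))) F"
    using has_derivative_snd[OF assms[unfolded has_vector_derivative_def]] .
  moreover have "(\<lambda>h. h * snd v) = (*) (snd v)" by (rule ext) simp
  ultimately show ?thesis by (simp add: has_field_derivative_def)
qed

lemma mono_exp:
  fixes W W' :: "real \<Rightarrow> real"
  assumes s: "0 \<le> s" "s \<le> T" and cont: "continuous_on {0..T} W"
    and der: "\<And>t. 0 < t \<Longrightarrow> t < s \<Longrightarrow> (W has_real_derivative W' t) (at t within {0..T}) \<and> W' t \<le> -\<gamma> * W t"
  shows "W s \<le> W 0 * exp (-\<gamma> * s)"
proof -
  define H where "H t = W t * exp (\<gamma> * t)" for t
  have "H s \<le> H 0"
  proof (rule DERIV_nonpos_imp_decreasing_open[OF s(1)])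
    fix x assume x: "0 < x" "x < s"
    then have atx: "at x within {0..T} = at x" using s by (intro at_within_Icc_at) auto
    have d0: "(W has_real_derivative W' x) (at x within {0..T})" and le: "W' x \<le> -\<gamma> * W x"
      using der[OF x] by auto
    have d: "(W has_real_derivative W' x) (at x)" using d0 unfolding atx .
    have e: "((\<lambda>t. exp (\<gamma> * t)) has_real_derivative exp (\<gamma> * x) * \<gamma>) (at x)"
      by (intro derivative_eq_intros) auto
    have "(H has_real_derivative (W' x * exp (\<gamma> * x) + exp (\<gamma> * x) * \<gamma> * W x)) (at x)"
      unfolding H_def by (rule DERIV_mult[OF d e])
    moreover have "W' x * exp (\<gamma> * x) + exp (\<gamma> * x) * \<gamma> * W x \<le> 0"
    proof -
      have "W' x * exp (\<gamma> * x) + exp (\<gamma> * x) * \<gamma> * W x = exp (\<gamma> * x) * (W' x + \<gamma> * W x)"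
        by (simp add: algebra_simps)
      also have "\<dots> \<le> 0" using le by (intro mult_nonneg_nonpos) auto
      finally show ?thesis .
    qed
    ultimately show "\<exists>y. (H has_real_derivative y) (at x) \<and> y \<le> 0" by blast
  next
    show "continuous_on {0..s} H" unfolding H_def
      by (intro continuous_intros continuous_on_subset[OF cont]) (use s in auto)
  qed
  then have "W s * exp (\<gamma> * s) \<le> W 0" by (simp add: H_def)
  then have "W s * exp (\<gamma> * s) * exp (-\<gamma> * s) \<le> W 0 * exp (-\<gamma> * s)"
    by (intro mult_right_mono) auto
  then show ?thesis by (simp add: mult.assoc flip: exp_add)
qed

lemma first_exit:
  fixes f :: "real \<Rightarrow> real"
  assumes T: "0 \<le> T" and cont: "continuous_on {0..T} f" and f0: "f 0 < R"
    and ex: "t0 \<in> {0..T}" "R \<le> f t0"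
  shows "\<exists>t1\<in>{0..T}. f t1 = R \<and> (\<forall>t\<in>{0..<t1}. f t < R)"
proof -
  define Z where "Z = {0..T} \<inter> f -` {R..}"
  have cZ: "closed Z" unfolding Z_def by (rule continuous_closed_preimage[OF cont]) auto
  have nZ: "Z \<noteq> {}" using ex by (auto simp: Z_def)
  have bZ: "bdd_below Z" unfolding Z_def by (rule bdd_belowI[of _ 0]) auto
  define t1 where "t1 = Inf Z"
  have t1Z: "t1 \<in> Z" unfolding t1_def by (rule closed_contains_Inf[OF nZ bZ cZ])
  have lower: "\<And>t. t \<in> Z \<Longrightarrow> t1 \<le> t" unfolding t1_def using bZ by (simp add: cInf_lower)
  have t1r: "t1 \<in> {0..T}" "R \<le> f t1" using t1Z by (auto simp: Z_def)
  have before: "\<forall>t\<in>{0..<t1}. f t < R"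
  proof
    fix t assume t: "t \<in> {0..<t1}"
    show "f t < R"
    proof (rule ccontr)
      assume "\<not> f t < R"
      then have "t \<in> Z" using t t1r by (auto simp: Z_def)
      then show False using lower t by force
    qed
  qed
  obtain s where s: "0 \<le> s" "s \<le> t1" "f s = R"
  proof -
    have "continuous_on {0..t1} f" using cont t1r by (auto intro: continuous_on_subset)
    then show ?thesis using IVT'[of f 0 R t1] f0 t1r that by auto
  qed
  have "s \<in> Z" using s t1r by (auto simp: Z_def)
  then have "s = t1" using lower s by force
  then show ?thesis using s t1r before by blast
qed

lemma decay:
  fixes W W' :: "real \<Rightarrow> real"
  assumes T: "0 \<le> T" and cont: "continuous_on {0..T} W" and R: "0 < R" and W0: "W 0 < R"
    and g: "0 \<le> \<gamma>"
    and der: "\<And>t. t \<in> {0..T} \<Longrightarrow> W t < R \<Longrightarrow> (W has_real_derivative W' t) (at t within {0..T}) \<and> W' t \<le> -\<gamma> * W t"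
  shows "\<forall>t\<in>{0..T}. W t \<le> W 0 * exp (-\<gamma> * t)"
proof -
  have small: "W 0 * exp (-\<gamma> * t) < R" if "0 \<le> t" for t
  proof (cases "W 0 \<ge> 0")
    case True
    have "exp (-\<gamma> * t) \<le> 1" using g that by (simp add: mult_nonneg_nonneg)
    then have "W 0 * exp (-\<gamma> * t) \<le> W 0" using True by (simp add: mult_left_le)
    then show ?thesis using W0 by linarith
  next
    case False
    then have "W 0 * exp (-\<gamma> * t) < 0" by (simp add: mult_neg_pos)
    then show ?thesis using R by linarith
  qed
  have allR: "\<forall>t\<in>{0..T}. W t < R"
  proof (rule ccontr)
    assume "\<not> ?thesis"
    then obtain t0 where "t0 \<in> {0..T}" "R \<le> W t0" by force
    from first_exit[OF T cont W0 this] obtain t1 where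
      t1: "t1 \<in> {0..T}" "W t1 = R" "\<forall>t\<in>{0..<t1}. W t < R" by blast
    have "W t1 \<le> W 0 * exp (-\<gamma> * t1)"
      by (rule mono_exp[of t1 T W W' \<gamma>]) (use t1 cont der in auto)
    then show False using small[of t1] t1 by auto
  qed
  show ?thesis
  proof
    fix t assume t: "t \<in> {0..T}"
    show "W t \<le> W 0 * exp (-\<gamma> * t)"
      by (rule mono_exp[of t T W W' \<gamma>]) (use t cont der allR in auto)
  qed
qed


definition N1f :: "real \<Rightarrow> real \<Rightarrow> real \<Rightarrow> real" where
  "N1f K w h = ((K - w) + sqrt ((K - w)^2 - 4 * K * (h - w))) / 2"
definition N2f :: "real \<Rightarrow> real \<Rightarrow> real \<Rightarrow> real" where
  "N2f K w h = ((K - w) - sqrt ((K - w)^2 - 4 * K * (h - w))) / 2"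
definition phif :: "real \<Rightarrow> real \<Rightarrow> real \<Rightarrow> real \<Rightarrow> real" where
  "phif b c \<delta> N = c * N / (b + N^2) - \<delta>"

locale ppsys =
  fixes r K h w a b c \<delta> :: real
  assumes pos: "0 < r" "0 < K" "0 < h" "0 < w" "0 < a" "0 < b" "0 < c" "0 < \<delta>"
    and wK: "w < K" and hw: "h < w"
begin

abbreviation "N1 \<equiv> N1f K w h"
abbreviation "N2 \<equiv> N2f K w h"
abbreviation "phi \<equiv> phif b c \<delta>"
abbreviation "F \<equiv> pp_field r K h w a b c \<delta>"

lemma sqD: "K - w < sqrt ((K - w)^2 - 4 * K * (h - w))"
proof -
  have "(K - w)^2 < (K - w)^2 - 4 * K * (h - w)" using pos hw by (simp add: mult_pos_neg)
  then have "sqrt ((K - w)^2) < sqrt ((K - w)^2 - 4 * K * (h - w))" by (rule real_sqrt_less_mono)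
  then show ?thesis using wK by simp
qed

lemma D_pos: "0 < (K - w)^2 - 4 * K * (h - w)"
proof -
  have "0 < K * (w - h)" using pos hw by simp
  moreover have "0 \<le> (K - w)^2" by simp
  moreover have "(K-w)^2 - 4*K*(h-w) = (K-w)^2 + 4*(K*(w-h))" by (simp add: algebra_simps)
  ultimately show ?thesis by linarith
qed

lemma N1_pos: "0 < N1" using sqD wK unfolding N1f_def by simp
lemma N2_neg: "N2 < 0" using sqD unfolding N2f_def by simp
lemma N12_sum: "N1 + N2 = K - w" unfolding N1f_def N2f_def by (simp add: field_simps)
lemma N12_prod: "N1 * N2 = K * (h - w)"
proof -
  have s: "(sqrt ((K - w)^2 - 4 * K * (h - w)))^2 = (K - w)^2 - 4 * K * (h - w)"
    using D_pos by simp
  have "N1 * N2 = ((K - w)^2 - (sqrt ((K - w)^2 - 4 * K * (h - w)))^2) / 4"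
    unfolding N1f_def N2f_def by (simp add: field_simps power2_eq_square)
  then show ?thesis using s by simp
qed
lemma N12_diff: "N1 - N2 = sqrt ((K - w)^2 - 4 * K * (h - w))" unfolding N1f_def N2f_def by (simp add: field_simps)

lemma g_factor:
  assumes "-w < N"
  shows "1 - N / K - h / (w + N) = - ((N - N1) * (N - N2)) / (K * (w + N))"
proof -
  have e: "(N - N1) * (N - N2) = N^2 - (K - w) * N + K * (h - w)"
  proof -
    have "(N - N1) * (N - N2) = N^2 - (N1 + N2) * N + N1 * N2" by (simp add: algebra_simps power2_eq_square)
    then show ?thesis using N12_sum N12_prod by simp
  qed
  have "w + N \<noteq> 0" using assms by simp
  have K0: "K \<noteq> 0" using pos(2) by simp
  have "1 - N / K - h / (w + N) = (K * (w + N) - N * (w + N) - h * K) / (K * (w + N))"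
    using K0 \<open>w + N \<noteq> 0\<close> by (simp add: field_simps)
  also have "K * (w + N) - N * (w + N) - h * K = - (N^2 - (K - w) * N + K * (h - w))"
    by (simp add: algebra_simps power2_eq_square)
  finally show ?thesis using e by simp
qed

lemma F_eq: "F (N, P) = (r * N * (1 - N / K - h / (w + N)) - a * N * P / (b + N^2), P * phi N)"
proof -
  have "c * N * P / (b + N^2) - \<delta> * P = P * (c * N / (b + N^2) - \<delta>)"
    by (simp add: algebra_simps)
  then show ?thesis by (simp add: pp_field_def phif_def)
qed

lemma g_N1: "1 - N1 / K - h / (w + N1) = 0"
  using g_factor[of N1] N1_pos pos by simp

lemma F_E: "F (N1, 0) = 0"
  using F_eq[of N1 0] g_N1 by (simp add: zero_prod_def)

end

context ppsys begin

lemma phi_cont: "isCont phi x"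
proof -
  have "b + x^2 \<noteq> 0" using pos(6) by (metis add_pos_nonneg zero_le_power2 less_irrefl)
  then show ?thesis unfolding phif_def by (intro continuous_intros) auto
qed

lemma phi_near:
  assumes "0 < e"
  shows "\<exists>d>0. \<forall>N. \<bar>N - N1\<bar> < d \<longrightarrow> \<bar>phi N - phi N1\<bar> < e"
  using phi_cont[of N1, unfolded continuous_at_eps_delta] assms by (simp add: dist_real_def)

lemma stable_bound:
  assumes neg: "phi N1 < 0"
  obtains \<alpha>0 k \<gamma> where "0 < \<alpha>0" "\<alpha>0 \<le> N1/2" "0 < k" "0 < \<gamma>"
    "\<And>N P. \<bar>N - N1\<bar> < \<alpha>0 \<Longrightarrow>
        2*(N-N1)*fst (F(N,P)) + 2*k*P* snd (F(N,P)) \<le> -\<gamma>*((N-N1)^2 + k*P^2)"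
proof -
  define \<mu> where "\<mu> = - phi N1 / 2"
  have mu: "0 < \<mu>" using neg by (simp add: \<mu>_def)
  obtain \<alpha>' where al: "\<alpha>' > 0" "\<And>N. \<bar>N - N1\<bar> < \<alpha>' \<Longrightarrow> \<bar>phi N - phi N1\<bar> < \<mu>"
    using phi_near[OF mu] by blast
  define \<alpha>0 where "\<alpha>0 = min \<alpha>' (N1/2)"
  define m where "m = (N1/2) * (N1/2) / (K * (w + 3*N1/2))"
  define C where "C = a * (3*N1/2) / b"
  define k where "k = C^2 / (r*m*\<mu>) + 1"
  define \<gamma> where "\<gamma> = min (r*m) \<mu>"
  have N1p: "0 < N1" by (rule N1_pos)
  have m0: "0 < m" unfolding m_def using N1p pos by (intro divide_pos_pos mult_pos_pos) auto
  have rm0: "0 < r*m" using m0 pos by simp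
  have C0: "0 < C" unfolding C_def using N1p pos by simp
  have k0: "0 < k" unfolding k_def using rm0 mu by (simp add: add_nonneg_pos)
  have kC: "C^2 / (r*m) = (k - 1) * \<mu>" unfolding k_def using rm0 mu by (simp add: field_simps)
  have g0: "0 < \<gamma>" unfolding \<gamma>_def using rm0 mu by simp
  show ?thesis
  proof (rule that[of \<alpha>0 k \<gamma>])
    show "0 < \<alpha>0" "\<alpha>0 \<le> N1/2" using al N1p by (auto simp: \<alpha>0_def)
    show "0 < k" "0 < \<gamma>" by (fact k0, fact g0)
    fix N P assume uN: "\<bar>N - N1\<bar> < \<alpha>0"
    define u where "u = N - N1"
    have Nlo: "N1/2 < N" and Nhi: "N < 3*N1/2" using uN by (auto simp: \<alpha>0_def abs_if split: if_splits)
    have Npos: "0 < N" using Nlo N1p by simp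
    have phiN: "phi N \<le> -\<mu>" using al(2)[of N] uN neg by (auto simp: \<alpha>0_def \<mu>_def)
    have wN: "0 < w + N" using Npos pos by simp
    have g: "1 - N/K - h/(w+N) = -(u*(N-N2))/(K*(w+N))"
      using g_factor[of N] Npos pos by (simp add: u_def)
    have NN2: "N1/2 < N - N2" using N2_neg Nlo by simp
    have frac: "m \<le> N*(N-N2)/(K*(w+N))"
      unfolding m_def
    proof (rule frac_le)
      show "0 \<le> N*(N-N2)" using Npos NN2 N1p by simp
      show "N1/2 * (N1/2) \<le> N*(N-N2)" using Nlo NN2 N1p by (intro mult_mono) auto
      show "0 < K*(w+N)" using pos wN by simp
      show "K*(w+N) \<le> K*(w+3*N1/2)" using pos Nhi by simp
    qed
    have i: "u*(r*N*(1 - N/K - h/(w+N))) \<le> -(r*m)*u^2"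
    proof -
      have "u*(r*N*(1 - N/K - h/(w+N))) = -(r*u^2) * (N*(N-N2)/(K*(w+N)))"
        unfolding g by (simp add: power2_eq_square)
      also have "\<dots> \<le> -(r*u^2) * m"
        using frac pos by (intro mult_left_mono_neg) auto
      finally show ?thesis by (simp add: mult_ac)
    qed
    have ii: "\<bar>a*N*P/(b+N^2)\<bar> \<le> C*\<bar>P\<bar>"
    proof -
      have bN: "b \<le> b + N^2" by simp
      have "a*N/(b+N^2) \<le> a*N/b"
        using pos Npos bN by (intro divide_left_mono) (auto intro!: mult_pos_pos add_pos_nonneg)
      also have "\<dots> \<le> C" unfolding C_def using pos Nhi by (intro divide_right_mono) auto
      finally have le: "a*N/(b+N^2) \<le> C" .
      have nn: "0 \<le> a*N/(b+N^2)" using pos Npos by (simp add: add_pos_nonneg)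
      have e1: "a*N*P/(b+N^2) = (a*N/(b+N^2)) * P" by simp
      have "\<bar>a*N*P/(b+N^2)\<bar> = (a*N/(b+N^2)) * \<bar>P\<bar>" by (simp only: e1 abs_mult abs_of_nonneg[OF nn])
      also have "\<dots> \<le> C*\<bar>P\<bar>" using le by (intro mult_right_mono) auto
      finally show ?thesis .
    qed
    have iii: "P*(P*phi N) \<le> -\<mu>*P^2"
    proof -
      have "P*(P*phi N) = P^2 * phi N" by (simp add: power2_eq_square)
      also have "\<dots> \<le> P^2 * (-\<mu>)" using phiN by (intro mult_left_mono) auto
      finally show ?thesis by (simp add: mult.commute)
    qed
    have amgm: "2*C*\<bar>u\<bar>*\<bar>P\<bar> \<le> r*m*u^2 + (C^2/(r*m))*P^2"
    proof -
      have "0 \<le> (r*m*\<bar>u\<bar> - C*\<bar>P\<bar>)^2 / (r*m)" using rm0 by simp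
      also have "(r*m*\<bar>u\<bar> - C*\<bar>P\<bar>)^2 = (r*m)*((r*m)*u^2) - (r*m)*(2*C*\<bar>u\<bar>*\<bar>P\<bar>) + C^2*P^2"
        by (simp add: power2_eq_square algebra_simps abs_mult_self)
      also have "\<dots> / (r*m) = r*m*u^2 + (C^2/(r*m))*P^2 - 2*C*\<bar>u\<bar>*\<bar>P\<bar>"
        using rm0 m0 pos by (simp add: diff_divide_distrib add_divide_distrib)
      finally show ?thesis by simp
    qed
    have cross: "-(2*u*(a*N*P/(b+N^2))) \<le> 2*C*\<bar>u\<bar>*\<bar>P\<bar>"
    proof -
      have "-(2*u*(a*N*P/(b+N^2))) \<le> 2*\<bar>u\<bar>*\<bar>a*N*P/(b+N^2)\<bar>"
        using abs_ge_minus_self[of "u*(a*N*P/(b+N^2))"] by (simp add: abs_mult)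
      also have "\<dots> \<le> 2*\<bar>u\<bar>*(C*\<bar>P\<bar>)" using ii by (intro mult_left_mono) auto
      finally show ?thesis by (simp add: mult_ac)
    qed
    have expand: "2*(N-N1)*fst (F(N,P)) + 2*k*P* snd (F(N,P))
        = 2*(u*(r*N*(1 - N/K - h/(w+N)))) - 2*u*(a*N*P/(b+N^2)) + 2*k*(P*(P*phi N))"
    proof -
      have f1: "fst (F(N,P)) = r*N*(1 - N/K - h/(w+N)) - a*N*P/(b+N^2)" by (simp add: F_eq)
      have f2: "snd (F(N,P)) = P*phi N" by (simp add: F_eq)
      have gen: "\<And>x y z. 2*u*(x - y) + 2*k*P*z = 2*(u*x) - 2*u*y + 2*k*(P*z)"
        by (simp add: algebra_simps)
      show ?thesis unfolding f1 f2 u_def[symmetric] by (rule gen)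
    qed
    define X where "X = u*(r*N*(1 - N/K - h/(w+N)))"
    define Y where "Y = u*(a*N*P/(b+N^2))"
    define Z where "Z = P*(P*phi N)"
    define Q where "Q = u^2"
    define S where "S = P^2"
    define R where "R = \<bar>u\<bar>*\<bar>P\<bar>"
    have Q0: "0 \<le> Q" and S0: "0 \<le> S" by (simp_all add: Q_def S_def)
    have fi: "X \<le> -(r*m*Q)" using i by (simp add: X_def Q_def)
    have fc: "-(2*Y) \<le> 2*C*R" using cross by (simp add: Y_def R_def mult.assoc)
    have fz: "k*Z \<le> -(k*\<mu>*S)"
    proof -
      have "k*Z \<le> k*(-\<mu>*S)" unfolding Z_def S_def using iii k0 by (intro mult_left_mono) auto
      then show ?thesis by simp
    qed
    have fa: "2*C*R \<le> r*m*Q + (k*\<mu>*S - \<mu>*S)"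
    proof -
      have "(C^2/(r*m))*P^2 = ((k - 1)*\<mu>)*P^2" by (simp only: kC)
      then have e1: "(C^2/(r*m))*P^2 = k*\<mu>*S - \<mu>*S" by (simp add: S_def algebra_simps)
      have e2: "2*C*R = 2*C*\<bar>u\<bar>*\<bar>P\<bar>" by (simp add: R_def mult.assoc)
      show ?thesis using amgm unfolding e2 Q_def[symmetric] e1 by simp
    qed
    have g1: "\<gamma>*Q \<le> r*m*Q" unfolding \<gamma>_def using Q0 by (intro mult_right_mono) auto
    have g2: "\<gamma>*(k*S) \<le> k*\<mu>*S"
    proof -
      have "\<gamma>*(k*S) \<le> \<mu>*(k*S)" unfolding \<gamma>_def using S0 k0 by (intro mult_right_mono) auto
      then show ?thesis by (simp add: mult_ac)
    qed
    have muS: "0 \<le> \<mu>*S" using mu S0 by simp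
    have ex2: "2*(N-N1)*fst (F(N,P)) + 2*k*P* snd (F(N,P)) = 2*X - 2*Y + 2*(k*Z)"
      unfolding expand X_def Y_def Z_def by simp
    have dist: "-\<gamma>*((N-N1)^2 + k*P^2) = -(\<gamma>*Q) - \<gamma>*(k*S)"
      by (simp add: Q_def S_def u_def algebra_simps)
    have "2*X - 2*Y + 2*(k*Z) \<le> -(\<gamma>*Q) - \<gamma>*(k*S)"
      using fi fc fz fa g1 g2 muS by linarith
    then show "2*(N-N1)*fst (F(N,P)) + 2*k*P* snd (F(N,P)) \<le> -\<gamma>*((N-N1)^2 + k*P^2)"
      unfolding ex2 dist .
  qed
qed

end

lemma dist_E: "dist p (N, 0::real) = sqrt ((fst p - N)^2 + (snd p)^2)"
  by (cases p) (simp add: dist_Pair_Pair dist_real_def)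

lemma sol_cont: "solution_on G x {0..T} \<Longrightarrow> continuous_on {0..T} x"
  unfolding solution_on_def continuous_on_eq_continuous_within
  using has_vector_derivative_continuous by blast

context ppsys begin

lemma stable_traj:
  assumes a0: "0 < \<alpha>0" and k0: "0 < k" and g0: "0 < \<gamma>"
    and bnd: "\<And>N P. \<bar>N - N1\<bar> < \<alpha>0 \<Longrightarrow>
        2*(N-N1)*fst (F(N,P)) + 2*k*P* snd (F(N,P)) \<le> -\<gamma>*((N-N1)^2 + k*P^2)"
    and sol: "solution_on F x {0..T}" and T: "0 \<le> T"
    and V0: "(fst (x 0) - N1)^2 + k*(snd (x 0))^2 < \<alpha>0^2"
  shows "\<forall>t\<in>{0..T}. (fst (x t) - N1)^2 + k*(snd (x t))^2 \<le> ((fst (x 0) - N1)^2 + k*(snd (x 0))^2) * exp (-\<gamma>*t)"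
proof -
  define W where "W t = (fst (x t) - N1)^2 + k*(snd (x t))^2" for t
  define W' where "W' t = 2*(fst (x t)-N1)*fst (F (x t)) + 2*k* snd (x t)* snd (F (x t))" for t
  have cx: "continuous_on {0..T} x" by (rule sol_cont[OF sol])
  have cW: "continuous_on {0..T} W" unfolding W_def
    by (intro continuous_intros continuous_on_fst continuous_on_snd cx)
  have "\<forall>t\<in>{0..T}. W t \<le> W 0 * exp (-\<gamma>*t)"
  proof (rule decay[OF T cW _ _ _, of "\<alpha>0^2" \<gamma> W'])
    show "0 < \<alpha>0^2" using a0 by simp
    show "W 0 < \<alpha>0^2" using V0 by (simp add: W_def)
    show "0 \<le> \<gamma>" using g0 by simp
    fix t assume t: "t \<in> {0..T}" and Wt: "W t < \<alpha>0^2"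
    have dx: "(x has_vector_derivative F (x t)) (at t within {0..T})"
      using sol t unfolding solution_on_def by blast
    have d1: "((\<lambda>t. fst (x t)) has_real_derivative fst (F (x t))) (at t within {0..T})"
      by (rule vd_fst[OF dx])
    have d2: "((\<lambda>t. snd (x t)) has_real_derivative snd (F (x t))) (at t within {0..T})"
      by (rule vd_snd[OF dx])
    have "(W has_real_derivative W' t) (at t within {0..T})"
      unfolding W_def W'_def
      by (auto intro!: derivative_eq_intros d1 d2 simp: algebra_simps)
    moreover have "W' t \<le> -\<gamma> * W t"
    proof -
      have "(fst (x t) - N1)^2 < \<alpha>0^2" using Wt k0 unfolding W_def
        by (smt (verit) mult_nonneg_nonneg zero_le_power2)
      then have "\<bar>fst (x t) - N1\<bar> < \<alpha>0" using a0
        by (metis abs_of_pos power2_abs power_less_imp_less_base less_le)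
      from bnd[OF this, of "snd (x t)"] show ?thesis
        by (simp add: W_def W'_def)
    qed
    ultimately show "(W has_real_derivative W' t) (at t within {0..T}) \<and> W' t \<le> -\<gamma> * W t" by blast
  qed
  then show ?thesis by (simp add: W_def)
qed

end

lemma sol_restrict: "solution_on G x S \<Longrightarrow> S' \<subseteq> S \<Longrightarrow> solution_on G x S'"
  unfolding solution_on_def using has_vector_derivative_within_subset by blast

lemma lim_aux: assumes "0 < (g::real)" "0 < q" shows "((\<lambda>t. sqrt (V * exp (-g*t) / q)) \<longlongrightarrow> 0) at_top"
proof -
  have "filterlim (\<lambda>t. g*t) at_top at_top"
    by (rule filterlim_tendsto_pos_mult_at_top[OF tendsto_const assms(1) filterlim_ident])
  then have "filterlim (\<lambda>t. exp (g*t)) at_top at_top" by (rule filterlim_compose[OF exp_at_top])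
  then have "((\<lambda>t. inverse (exp (g*t))) \<longlongrightarrow> 0) at_top" by (rule tendsto_inverse_0_at_top)
  then have e: "((\<lambda>t. exp (-g*t)) \<longlongrightarrow> 0) at_top" by (simp add: exp_minus)
  have "((\<lambda>t. sqrt (V * exp (-g*t) / q)) \<longlongrightarrow> sqrt (V * 0 / q)) at_top"
    by (intro tendsto_intros e) (use assms in simp)
  then show ?thesis by simp
qed

context ppsys begin

lemma V_bounds:
  assumes k0: "0 < k"
  shows "min 1 k * (dist p (N1,0))^2 \<le> (fst p - N1)^2 + k*(snd p)^2"
    and "(fst p - N1)^2 + k*(snd p)^2 \<le> max 1 k * (dist p (N1,0))^2"
proof -
  have d2: "(dist p (N1,0))^2 = (fst p - N1)^2 + (snd p)^2" by (simp add: dist_E)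
  have a: "min 1 k * (fst p - N1)^2 \<le> (fst p - N1)^2" by (rule mult_left_le_one_le) (use k0 in auto)
  have b: "min 1 k * (snd p)^2 \<le> k*(snd p)^2" by (rule mult_right_mono) auto
  show "min 1 k * (dist p (N1,0))^2 \<le> (fst p - N1)^2 + k*(snd p)^2"
    unfolding d2 using a b by (simp add: distrib_left)
  have c: "(fst p - N1)^2 \<le> max 1 k * (fst p - N1)^2" by (rule mult_le_cancel_right1[THEN iffD2]) auto
  have e: "k*(snd p)^2 \<le> max 1 k * (snd p)^2" by (rule mult_right_mono) auto
  show "(fst p - N1)^2 + k*(snd p)^2 \<le> max 1 k * (dist p (N1,0))^2"
    unfolding d2 using c e by (simp add: distrib_left)
qed

lemma stable_part:
  assumes neg: "phi N1 < 0"
  shows "locally_asymptotically_stable F (N1, 0)"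
proof -
  obtain \<alpha>0 k \<gamma> where a0: "0 < \<alpha>0" and "\<alpha>0 \<le> N1/2" and k0: "0 < k" and g0: "0 < \<gamma>"
    and bnd: "\<And>N P. \<bar>N - N1\<bar> < \<alpha>0 \<Longrightarrow>
        2*(N-N1)*fst (F(N,P)) + 2*k*P* snd (F(N,P)) \<le> -\<gamma>*((N-N1)^2 + k*P^2)"
    by (rule stable_bound[OF neg]) (rule that)
  define V where "V p = (fst p - N1)^2 + k*(snd p)^2" for p :: "real \<times> real"
  define \<kappa> where "\<kappa> = min 1 k"
  define M where "M = max 1 k"
  have ka: "0 < \<kappa>" using k0 by (simp add: \<kappa>_def)
  have Ma: "0 < M" by (simp add: M_def)
  have Vlo: "\<kappa> * (dist p (N1,0))^2 \<le> V p" for p using V_bounds(1)[OF k0] by (simp add: V_def \<kappa>_def)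
  have Vhi: "V p \<le> M * (dist p (N1,0))^2" for p using V_bounds(2)[OF k0] by (simp add: V_def M_def)
  have V0: "0 \<le> V p" for p using k0 by (simp add: V_def)
  have traj: "\<forall>t\<in>{0..T}. V (x t) \<le> V (x 0) * exp (-\<gamma>*t)"
    if "solution_on F x {0..T}" "0 \<le> T" "V (x 0) < \<alpha>0^2" for x T
    using stable_traj[OF a0 k0 g0 bnd that(1,2)] that(3) unfolding V_def by blast
  have smallV: "V p < B" if "dist p (N1,0) < sqrt (B / M)" "0 < B" for p B
  proof -
    have "(dist p (N1,0))^2 < (sqrt (B/M))^2"
      using that by (intro power_strict_mono) auto
    then have "(dist p (N1,0))^2 < B/M" using that Ma by simp
    then have "M * (dist p (N1,0))^2 < B" using Ma by (simp add: field_simps)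
    then show ?thesis using Vhi[of p] by linarith
  qed
  have distsmall: "dist p (N1,0) < e" if "V p < \<kappa> * e^2" "0 < e" for p e
  proof -
    have "\<kappa> * (dist p (N1,0))^2 < \<kappa> * e^2" using Vlo[of p] that by linarith
    then have "(dist p (N1,0))^2 < e^2" using ka by simp
    then show ?thesis using that by (simp add: power_less_imp_less_base)
  qed
  have ls: "lyapunov_stable F (N1, 0)"
    unfolding lyapunov_stable_def
  proof (intro allI impI)
    fix \<epsilon> :: real assume e: "0 < \<epsilon>"
    define B where "B = min (\<alpha>0^2) (\<kappa> * \<epsilon>^2)"
    have B0: "0 < B" using a0 ka e by (simp add: B_def)
    show "\<exists>d>0. \<forall>x T. 0 \<le> T \<longrightarrow> solution_on F x {0..T} \<longrightarrow> dist (x 0) (N1, 0) < d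
        \<longrightarrow> (\<forall>t\<in>{0..T}. dist (x t) (N1, 0) < \<epsilon>)"
    proof (intro exI[of _ "sqrt (B/M)"] conjI allI impI ballI)
      show "0 < sqrt (B/M)" using B0 Ma by simp
      fix x T t assume T: "0 \<le> T" and sol: "solution_on F x {0..T}"
        and d: "dist (x 0) (N1, 0) < sqrt (B/M)" and t: "t \<in> {0..T}"
      have VB: "V (x 0) < B" by (rule smallV[OF d B0])
      have "V (x t) \<le> V (x 0) * exp (-\<gamma>*t)"
        using traj[OF sol T] VB t by (auto simp: B_def)
      also have "\<dots> \<le> V (x 0)"
        using V0[of "x 0"] g0 t by (intro mult_left_le) auto
      finally have "V (x t) < \<kappa> * \<epsilon>^2" using VB by (simp add: B_def)
      then show "dist (x t) (N1, 0) < \<epsilon>" by (rule distsmall[OF _ e])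
    qed
  qed
  have la: "locally_attractive F (N1, 0)"
    unfolding locally_attractive_def
  proof (intro exI[of _ "sqrt (\<alpha>0^2/M)"] conjI allI impI)
    show "0 < sqrt (\<alpha>0^2/M)" using a0 Ma by simp
    fix x assume sol: "solution_on F x {0..}" and d: "dist (x 0) (N1, 0) < sqrt (\<alpha>0^2/M)"
    have VB: "V (x 0) < \<alpha>0^2" by (rule smallV[OF d]) (use a0 in simp)
    have bound: "dist (x t) (N1, 0) \<le> sqrt (V (x 0) * exp (-\<gamma>*t) / \<kappa>)" if t: "0 \<le> t" for t
    proof -
      have sol': "solution_on F x {0..t}" by (rule sol_restrict[OF sol]) auto
      have "\<forall>s\<in>{0..t}. V (x s) \<le> V (x 0) * exp (-\<gamma>* s)" by (rule traj[OF sol' t VB])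
      then have "V (x t) \<le> V (x 0) * exp (-\<gamma>*t)" by (rule bspec) (use t in simp)
      then have "\<kappa> * (dist (x t) (N1,0))^2 \<le> V (x 0) * exp (-\<gamma>*t)" using Vlo[of "x t"] by linarith
      then have "(dist (x t) (N1,0))^2 \<le> V (x 0) * exp (-\<gamma>*t) / \<kappa>" using ka by (simp add: field_simps)
      then show ?thesis by (simp add: real_le_rsqrt)
    qed
    have "((\<lambda>t. dist (x t) (N1, 0)) \<longlongrightarrow> 0) at_top"
    proof (rule tendsto_sandwich[of "\<lambda>_. 0" _ _ "\<lambda>t. sqrt (V (x 0) * exp (-\<gamma>*t) / \<kappa>)"])
      show "\<forall>\<^sub>F t in at_top. 0 \<le> dist (x t) (N1, 0)" by simp
      show "\<forall>\<^sub>F t in at_top. dist (x t) (N1, 0) \<le> sqrt (V (x 0) * exp (-\<gamma>*t) / \<kappa>)"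
        using eventually_ge_at_top[of "0::real"] by (rule eventually_mono) (rule bound)
      show "((\<lambda>_. 0) \<longlongrightarrow> (0::real)) at_top" by simp
      show "((\<lambda>t. sqrt (V (x 0) * exp (-\<gamma>*t) / \<kappa>)) \<longlongrightarrow> 0) at_top"
        by (rule lim_aux[OF g0 ka])
    qed
    then show "(x \<longlongrightarrow> (N1, 0)) at_top" by (rule tendsto_dist_iff[THEN iffD2])
  qed
  show ?thesis unfolding locally_asymptotically_stable_def using F_E ls la by (simp add: zero_prod_def)
qed

end

lemma s_lip:
  fixes b n N N' :: real
  assumes b: "0 < b" and N: "0 \<le> N" "N \<le> n" and N': "0 \<le> N'" "N' \<le> n"
  shows "\<bar>N/(b+N^2) - N'/(b+N'^2)\<bar> \<le> (b+n^2)/(b*b) * \<bar>N - N'\<bar>"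
proof -
  have d1: "0 < b+N^2" and d2: "0 < b+N'^2" using b by (simp_all add: add_pos_nonneg)
  have id: "N/(b+N^2) - N'/(b+N'^2) = (N-N')*(b - N*N')/((b+N^2)*(b+N'^2))"
    using d1 d2 by (simp add: field_simps power2_eq_square)
  have nn: "0 \<le> N*N'" "N*N' \<le> n*n" using N N' by (auto intro: mult_mono)
  have num: "\<bar>b - N*N'\<bar> \<le> b + n^2" using nn b by (simp add: power2_eq_square abs_le_iff)
  have den: "b*b \<le> (b+N^2)*(b+N'^2)" using b by (intro mult_mono) auto
  have "\<bar>N/(b+N^2) - N'/(b+N'^2)\<bar> = \<bar>N-N'\<bar> * (\<bar>b - N*N'\<bar> / ((b+N^2)*(b+N'^2)))"
    unfolding id using d1 d2 by (simp add: abs_mult abs_divide)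
  also have "\<dots> \<le> \<bar>N-N'\<bar> * ((b+n^2)/(b*b))"
    using num den b d1 d2 by (intro mult_left_mono frac_le) auto
  finally show ?thesis by (simp add: mult_ac)
qed

lemma s_bnd:
  fixes b n N :: real
  assumes b: "0 < b" and N: "0 \<le> N" "N \<le> n"
  shows "0 \<le> N/(b+N^2)" "N/(b+N^2) \<le> n/b"
proof -
  have d1: "0 < b+N^2" using b by (simp add: add_pos_nonneg)
  show "0 \<le> N/(b+N^2)" using d1 N by simp
  have "N/(b+N^2) \<le> N/b" using b N d1 by (intro divide_left_mono) (auto intro: mult_pos_pos)
  also have "\<dots> \<le> n/b" using b N by (intro divide_right_mono) auto
  finally show "N/(b+N^2) \<le> n/b" .
qed

lemma f_lip:
  fixes r K h w n N N' :: real
  assumes pos: "0 < r" "0 < K" "0 < h" "0 < w" and N: "0 \<le> N" "N \<le> n" and N': "0 \<le> N'" "N' \<le> n"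
  shows "\<bar>r*N*(1 - N/K - h/(w+N)) - r*N'*(1 - N'/K - h/(w+N'))\<bar> \<le> (r + 2*r*n/K + r*h/w) * \<bar>N - N'\<bar>"
proof -
  have w1: "0 < w+N" and w2: "0 < w+N'" using pos N N' by auto
  have id: "r*N*(1 - N/K - h/(w+N)) - r*N'*(1 - N'/K - h/(w+N')) = (N - N')*(r - r*(N+N')/K - r*h*w/((w+N)*(w+N')))"
  proof -
    have n1: "w+N \<noteq> 0" "w+N' \<noteq> 0" "K \<noteq> 0" using w1 w2 pos by auto
    have e1: "\<And>M. w+M \<noteq> 0 \<Longrightarrow> r*M*(1 - M/K - h/(w+M)) = r*M - r*M*M/K - r*h*(M/(w+M))"
      by (simp add: algebra_simps)
    have e2: "N/(w+N) - N'/(w+N') = w*(N-N')/((w+N)*(w+N'))"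
      using n1 by (simp add: divide_simps) (simp add: algebra_simps)
    have e3: "r*(N+N')/K * (N - N') = r*N*N/K - r*N'*N'/K"
      using n1 by (simp add: divide_simps) (simp add: algebra_simps)
    have "r*N*(1 - N/K - h/(w+N)) - r*N'*(1 - N'/K - h/(w+N'))
        = r*(N - N') - (r*N*N/K - r*N'*N'/K) - r*h*(N/(w+N) - N'/(w+N'))"
      unfolding e1[OF n1(1)] e1[OF n1(2)] by (simp add: algebra_simps)
    also have "\<dots> = r*(N - N') - r*(N+N')/K * (N - N') - r*h*(w*(N-N')/((w+N)*(w+N')))"
      unfolding e2 e3 ..
    also have "\<dots> = (N - N')*(r - r*(N+N')/K - r*h*w/((w+N)*(w+N')))"
      by (simp add: algebra_simps)
    finally show ?thesis .
  qed
  have t2: "r*(N+N')/K \<le> 2*r*n/K" using pos N N' by (intro divide_right_mono) auto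
  have t3: "r*h*w/((w+N)*(w+N')) \<le> r*h*w/(w*w)"
    using pos N N' by (intro divide_left_mono mult_mono mult_pos_pos) auto
  have t3': "r*h*w/(w*w) = r*h/w" using pos by simp
  have nn2: "0 \<le> r*(N+N')/K" and nn3: "0 \<le> r*h*w/((w+N)*(w+N'))" using pos N N' w1 w2 by auto
  have "\<bar>r - r*(N+N')/K - r*h*w/((w+N)*(w+N'))\<bar> \<le> r + 2*r*n/K + r*h/w"
    using t2 t3 t3' nn2 nn3 pos by (simp add: abs_le_iff)
  then have "\<bar>N - N'\<bar> * \<bar>r - r*(N+N')/K - r*h*w/((w+N)*(w+N'))\<bar> \<le> \<bar>N - N'\<bar> * (r + 2*r*n/K + r*h/w)"
    by (intro mult_left_mono) auto
  then show ?thesis unfolding id abs_mult by (simp add: mult_ac)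
qed

context ppsys begin

lemma F_lip:
  assumes be: "0 \<le> \<beta>" and n: "0 \<le> n"
  obtains Lc where "0 < Lc" "\<And>N N' P P'. 0 \<le> N \<Longrightarrow> N \<le> n \<Longrightarrow> 0 \<le> N' \<Longrightarrow> N' \<le> n \<Longrightarrow> \<bar>P'\<bar> \<le> \<beta> \<Longrightarrow>
      norm (F(N,P) - F(N',P')) \<le> Lc*(\<bar>N-N'\<bar> + \<bar>P-P'\<bar>)"
proof -
  define Ls where "Ls = (b+n^2)/(b*b)"
  define Lf where "Lf = r + 2*r*n/K + r*h/w"
  define q where "q = n/b"
  define Lc where "Lc = Lf + a*\<beta>*Ls + a*q + c*q + \<delta> + \<beta>*c*Ls"
  have Ls0: "0 \<le> Ls" unfolding Ls_def using pos by (simp add: add_nonneg_nonneg)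
  have Lf0: "0 \<le> Lf" unfolding Lf_def using pos n by simp
  have q0: "0 \<le> q" unfolding q_def using pos n by simp
  have Lc0: "0 < Lc"
  proof -
    have "0 \<le> a*\<beta>*Ls" "0 \<le> a*q" "0 \<le> c*q" "0 \<le> \<beta>*c*Ls"
      using Ls0 q0 pos be by auto
    then show ?thesis unfolding Lc_def using Lf0 pos by linarith
  qed
  show ?thesis
  proof (rule that[OF Lc0])
    fix N N' P P' assume N: "0 \<le> N" "N \<le> n" and N': "0 \<le> N'" "N' \<le> n" and P': "\<bar>P'\<bar> \<le> \<beta>"
    define sN where "sN = N/(b+N^2)"
    define sN' where "sN' = N'/(b+N'^2)"
    define x where "x = \<bar>N-N'\<bar>"
    define y where "y = \<bar>P-P'\<bar>"
    have x0: "0 \<le> x" and y0: "0 \<le> y" by (simp_all add: x_def y_def)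
    have sl: "\<bar>sN - sN'\<bar> \<le> Ls * x" unfolding sN_def sN'_def Ls_def x_def by (rule s_lip[OF pos(6) N N'])
    have sb: "0 \<le> sN" "sN \<le> q" unfolding sN_def q_def using s_bnd[OF pos(6) N] by auto
    have fl: "\<bar>r*N*(1 - N/K - h/(w+N)) - r*N'*(1 - N'/K - h/(w+N'))\<bar> \<le> Lf * x"
      unfolding Lf_def x_def by (rule f_lip[OF pos(1-4) N N'])
    have F1: "fst (F(N,P)) = r*N*(1 - N/K - h/(w+N)) - a*(P* sN)"
      by (simp add: F_eq sN_def)
    have F1': "fst (F(N',P')) = r*N'*(1 - N'/K - h/(w+N')) - a*(P'* sN')"
      by (simp add: F_eq sN'_def)
    have F2: "snd (F(N,P)) = P*(c* sN - \<delta>)" by (simp add: F_eq sN_def phif_def)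
    have F2': "snd (F(N',P')) = P'*(c* sN' - \<delta>)" by (simp add: F_eq sN'_def phif_def)
    have pd: "\<bar>P* sN - P'* sN'\<bar> \<le> y*q + \<beta>*(Ls*x)"
    proof -
      have "P* sN - P'* sN' = (P-P')* sN + P'*(sN - sN')" by (simp add: algebra_simps)
      then have "\<bar>P* sN - P'* sN'\<bar> \<le> \<bar>P-P'\<bar>*\<bar>sN\<bar> + \<bar>P'\<bar>*\<bar>sN - sN'\<bar>"
        by (simp add: abs_mult[symmetric] abs_triangle_ineq)
      also have "\<dots> \<le> y*q + \<beta>*(Ls*x)"
        using sb sl P' y0 be by (intro add_mono mult_mono) (auto simp: y_def abs_of_nonneg[OF sb(1)])
      finally show ?thesis .
    qed
    have d1: "\<bar>fst (F(N,P)) - fst (F(N',P'))\<bar> \<le> Lf*x + a*(y*q + \<beta>*(Ls*x))"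
    proof -
      have "fst (F(N,P)) - fst (F(N',P')) = (r*N*(1 - N/K - h/(w+N)) - r*N'*(1 - N'/K - h/(w+N'))) - a*(P* sN - P'* sN')"
        unfolding F1 F1' by (simp add: algebra_simps)
      then have "\<bar>fst (F(N,P)) - fst (F(N',P'))\<bar> \<le> \<bar>r*N*(1 - N/K - h/(w+N)) - r*N'*(1 - N'/K - h/(w+N'))\<bar> + a*\<bar>P* sN - P'* sN'\<bar>"
        using abs_triangle_ineq4[of "r*N*(1 - N/K - h/(w+N)) - r*N'*(1 - N'/K - h/(w+N'))" "a*(P* sN - P'* sN')"] pos
        by (simp add: abs_mult)
      also have "\<dots> \<le> Lf*x + a*(y*q + \<beta>*(Ls*x))"
        using fl pd pos by (intro add_mono mult_left_mono) auto
      finally show ?thesis .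
    qed
    have d2: "\<bar>snd (F(N,P)) - snd (F(N',P'))\<bar> \<le> y*(c*q + \<delta>) + \<beta>*(c*(Ls*x))"
    proof -
      have "snd (F(N,P)) - snd (F(N',P')) = (P-P')*(c* sN - \<delta>) + P'*(c*(sN - sN'))"
        unfolding F2 F2' by (simp add: algebra_simps)
      then have "\<bar>snd (F(N,P)) - snd (F(N',P'))\<bar> \<le> \<bar>P-P'\<bar>*\<bar>c* sN - \<delta>\<bar> + \<bar>P'\<bar>*\<bar>c*(sN - sN')\<bar>"
        by (simp add: abs_mult[symmetric] abs_triangle_ineq)
      also have "\<dots> \<le> y*(c*q + \<delta>) + \<beta>*(c*(Ls*x))"
      proof (intro add_mono mult_mono)
        have "c* sN \<le> c*q" using sb pos by simp
        moreover have "0 \<le> c* sN" using sb pos by simp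
        ultimately show "\<bar>c* sN - \<delta>\<bar> \<le> c*q + \<delta>" unfolding abs_le_iff using pos by linarith
        show "\<bar>c*(sN - sN')\<bar> \<le> c*(Ls*x)" using sl pos by (simp add: abs_mult)
      qed (use P' y0 be pos Ls0 x0 q0 in \<open>auto simp: y_def\<close>)
      finally show ?thesis .
    qed
    have "norm (F(N,P) - F(N',P')) \<le> \<bar>fst (F(N,P)) - fst (F(N',P'))\<bar> + \<bar>snd (F(N,P)) - snd (F(N',P'))\<bar>"
    proof -
      have "F(N,P) - F(N',P') = (fst (F(N,P)) - fst (F(N',P')), snd (F(N,P)) - snd (F(N',P')))"
        by (simp add: prod_eq_iff)
      then show ?thesis
        using norm_Pair_le[of "fst (F(N,P)) - fst (F(N',P'))" "snd (F(N,P)) - snd (F(N',P'))"] by simp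
    qed
    also have "\<dots> \<le> Lf*x + a*(y*q + \<beta>*(Ls*x)) + (y*(c*q + \<delta>) + \<beta>*(c*(Ls*x)))"
      using d1 d2 by linarith
    also have "\<dots> \<le> Lc*(x + y)"
    proof -
      have e: "Lc*(x + y) = (Lf*x + a*(y*q + \<beta>*(Ls*x)) + (y*(c*q + \<delta>) + \<beta>*(c*(Ls*x))))
          + (Lf*y + \<delta>*x + a*(q*x) + c*(q*x) + Ls*(\<beta>*(a*y)) + Ls*(\<beta>*(c*y)))"
        by (simp add: Lc_def algebra_simps)
      have "0 \<le> Lf*y + \<delta>*x + a*(q*x) + c*(q*x) + Ls*(\<beta>*(a*y)) + Ls*(\<beta>*(c*y))"
        using Lf0 pos x0 y0 q0 Ls0 be by (intro add_nonneg_nonneg mult_nonneg_nonneg) auto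
      then show ?thesis unfolding e by linarith
    qed
    finally show "norm (F(N,P) - F(N',P')) \<le> Lc*(\<bar>N-N'\<bar> + \<bar>P-P'\<bar>)" by (simp add: x_def y_def)
  qed
qed

end

lemma dist_comp:
  fixes p :: "real \<times> real"
  shows "\<bar>fst p - N\<bar> \<le> dist p (N, 0)" "\<bar>snd p\<bar> \<le> dist p (N, 0)"
proof -
  have "sqrt ((fst p - N)^2) \<le> sqrt ((fst p - N)^2 + (snd p)^2)" by (rule real_sqrt_le_mono) simp
  then show "\<bar>fst p - N\<bar> \<le> dist p (N, 0)" by (simp add: dist_E)
  have "sqrt ((snd p)^2) \<le> sqrt ((fst p - N)^2 + (snd p)^2)" by (rule real_sqrt_le_mono) simp
  then show "\<bar>snd p\<bar> \<le> dist p (N, 0)" by (simp add: dist_E)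
qed

lemma norm_comp:
  fixes z :: "real \<times> real"
  shows "\<bar>fst z\<bar> \<le> norm z" "\<bar>snd z\<bar> \<le> norm z"
  using norm_fst_le[of "fst z" "snd z"] norm_snd_le[of "snd z" "fst z"] by simp_all

lemma clamp_lip:
  fixes lo hi x y :: real
  assumes "lo \<le> hi"
  shows "\<bar>max lo (min hi x) - max lo (min hi y)\<bar> \<le> \<bar>x - y\<bar>"
  using assms by (auto simp: max_def min_def abs_if)

context ppsys begin

lemma unstable_part:
  assumes posphi: "0 < phi N1"
  shows "\<not> lyapunov_stable F (N1, 0)"
proof
  assume ls: "lyapunov_stable F (N1, 0)"
  define \<mu> where "\<mu> = phi N1 / 2"
  have mu: "0 < \<mu>" using posphi by (simp add: \<mu>_def)
  obtain \<alpha>' where al: "\<alpha>' > 0" "\<And>N. \<bar>N - N1\<bar> < \<alpha>' \<Longrightarrow> \<bar>phi N - phi N1\<bar> < \<mu>"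
    using phi_near[OF mu] by blast
  define \<rho> where "\<rho> = min (\<alpha>'/2) (N1/2)"
  have N1p: "0 < N1" by (rule N1_pos)
  have rho: "0 < \<rho>" "\<rho> \<le> N1/2" "\<rho> < \<alpha>'" using al N1p by (auto simp: \<rho>_def)
  have phiN: "\<mu> \<le> phi N" if "\<bar>N - N1\<bar> \<le> \<rho>" for N
  proof -
    have "\<bar>phi N - phi N1\<bar> < \<mu>" using al(2)[of N] that rho by auto
    moreover have "-(phi N - phi N1) \<le> \<bar>phi N - phi N1\<bar>" by (rule abs_ge_minus_self)
    ultimately show ?thesis unfolding \<mu>_def by linarith
  qed
  define n where "n = 3*N1/2"
  obtain Lc where Lc0: "0 < Lc" and Flip: "\<And>N N' P P'. 0 \<le> N \<Longrightarrow> N \<le> n \<Longrightarrow> 0 \<le> N' \<Longrightarrow> N' \<le> n \<Longrightarrow> \<bar>P'\<bar> \<le> \<rho> \<Longrightarrow>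
      norm (F(N,P) - F(N',P')) \<le> Lc*(\<bar>N-N'\<bar> + \<bar>P-P'\<bar>)"
    using F_lip[of \<rho> n] rho N1p by (auto simp: n_def)
  define clN where "clN z = max (N1-\<rho>) (min (N1+\<rho>) z)" for z
  define clP where "clP z = max (-\<rho>) (min \<rho> z)" for z
  define G where "G p = F (clN (fst p), clP (snd p))" for p
  have clN_b: "0 \<le> clN z" "clN z \<le> n" for z using rho by (auto simp: clN_def n_def max_def min_def)
  have clP_b: "\<bar>clP z\<bar> \<le> \<rho>" for z using rho by (auto simp: clP_def)
  have clN_l: "\<bar>clN z - clN z'\<bar> \<le> \<bar>z - z'\<bar>" for z z' unfolding clN_def by (rule clamp_lip) (use rho in simp)
  have clP_l: "\<bar>clP z - clP z'\<bar> \<le> \<bar>z - z'\<bar>" for z z' unfolding clP_def by (rule clamp_lip) (use rho in simp)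
  have glip: "norm (G p - G q) \<le> (2*Lc) * norm (p - q)" for p q
  proof -
    have "norm (G p - G q) \<le> Lc*(\<bar>clN (fst p) - clN (fst q)\<bar> + \<bar>clP (snd p) - clP (snd q)\<bar>)"
      unfolding G_def by (rule Flip[OF clN_b clN_b clP_b])
    also have "\<dots> \<le> Lc*(\<bar>fst p - fst q\<bar> + \<bar>snd p - snd q\<bar>)"
      using clN_l clP_l Lc0 by (intro mult_left_mono add_mono) auto
    also have "\<dots> \<le> Lc*(norm (p - q) + norm (p - q))"
      using norm_comp[of "p - q"] Lc0 by (intro mult_left_mono add_mono) auto
    finally show ?thesis by simp
  qed
  have GF: "G p = F p" if "dist p (N1, 0) \<le> \<rho>" for p
  proof -
    have "\<bar>fst p - N1\<bar> \<le> \<rho>" "\<bar>snd p\<bar> \<le> \<rho>" using dist_comp[of p N1] that by linarith+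
    then have "clN (fst p) = fst p" "clP (snd p) = snd p" by (auto simp: clN_def clP_def abs_le_iff)
    then show ?thesis by (simp add: G_def)
  qed
  obtain d where d0: "0 < d" and stab: "\<And>x T. 0 \<le> T \<Longrightarrow> solution_on F x {0..T} \<Longrightarrow> dist (x 0) (N1, 0) < d
        \<Longrightarrow> (\<forall>t\<in>{0..T}. dist (x t) (N1, 0) < \<rho>)"
    using ls rho(1) unfolding lyapunov_stable_def by blast
  define P0 where "P0 = min d \<rho> / 2"
  have P0: "0 < P0" "P0 < d" "P0 < \<rho>" using d0 rho by (auto simp: P0_def)
  define T where "T = ln (\<rho> / P0) / \<mu>"
  have T0: "0 \<le> T" unfolding T_def using P0 mu rho by (intro divide_nonneg_pos) auto
  have eT: "P0 * exp (\<mu> * T) = \<rho>" unfolding T_def using P0 mu rho by simp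
  obtain y where y0: "y 0 = (N1, P0)" and soly: "solution_on G y {0..T}"
    using picard_exists[of "2*Lc" G T "(N1, P0)"] Lc0 glip T0 by auto
  define f where "f t = dist (y t) (N1, 0)" for t
  have cy: "continuous_on {0..T} y" by (rule sol_cont[OF soly])
  have cf: "continuous_on {0..T} f" unfolding f_def by (intro continuous_intros cy)
  have f0: "f 0 = P0" using P0 by (simp add: f_def y0 dist_Pair_Pair)
  have solF: "solution_on F y {0..S}" if S: "S \<le> T" and small: "\<forall>t\<in>{0..S}. f t \<le> \<rho>" for S
    unfolding solution_on_def
  proof
    fix t assume t: "t \<in> {0..S}"
    have "(y has_vector_derivative G (y t)) (at t within {0..T})"
      using soly t S unfolding solution_on_def by auto
    then have "(y has_vector_derivative G (y t)) (at t within {0..S})"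
      by (rule has_vector_derivative_within_subset) (use S in auto)
    moreover have "G (y t) = F (y t)" using small t by (intro GF) (auto simp: f_def)
    ultimately show "(y has_vector_derivative F (y t)) (at t within {0..S})" by simp
  qed
  show False
  proof (cases "\<exists>t0\<in>{0..T}. \<rho> \<le> f t0")
    case True
    then obtain t0 where "t0 \<in> {0..T}" "\<rho> \<le> f t0" by blast
    from first_exit[OF T0 cf _ this] f0 P0 obtain t1 where
      t1: "t1 \<in> {0..T}" "f t1 = \<rho>" "\<forall>t\<in>{0..<t1}. f t < \<rho>" by auto
    have "\<forall>t\<in>{0..t1}. f t \<le> \<rho>"
      using t1 by (metis atLeastAtMost_iff atLeastLessThan_iff less_eq_real_def)
    then have "solution_on F y {0..t1}" using t1 by (intro solF) auto
    then have "\<forall>t\<in>{0..t1}. dist (y t) (N1, 0) < \<rho>"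
      using stab[of t1 y] t1 P0 f0 by (auto simp: f_def)
    then show False using t1 by (auto simp: f_def)
  next
    case False
    then have small: "\<forall>t\<in>{0..T}. f t < \<rho>" by auto
    have solT: "solution_on F y {0..T}" using small by (intro solF) auto
    define ph where "ph t = phi (fst (y t))" for t
    have cph: "continuous_on {0..T} ph"
    proof -
      have "continuous_on UNIV phi" using phi_cont by (simp add: continuous_at_imp_continuous_on)
      then show ?thesis unfolding ph_def
        by (rule continuous_on_compose2) (auto intro: continuous_on_fst cy)
    qed
    have phmu: "\<mu> \<le> ph t" if "t \<in> {0..T}" for t
    proof -
      have "f t < \<rho>" using small that by auto
      then show ?thesis unfolding ph_def using dist_comp(1)[of "y t" N1] by (intro phiN) (simp add: f_def)
    qed
    define I where "I t = integral {0..t} ph" for t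
    define Q where "Q t = snd (y t) * exp (- I t)" for t
    have dQ: "(Q has_real_derivative 0) (at t within {0..T})" if t: "t \<in> {0..T}" for t
    proof -
      have dI: "(I has_real_derivative ph t) (at t within {0..T})"
        unfolding I_def has_real_derivative_iff_has_vector_derivative
        by (rule integral_has_vector_derivative[OF cph t])
      have dy: "(y has_vector_derivative F (y t)) (at t within {0..T})"
        using solT t unfolding solution_on_def by blast
      have dP: "((\<lambda>t. snd (y t)) has_real_derivative snd (F (y t))) (at t within {0..T})"
        by (rule vd_snd[OF dy])
      have sF: "snd (F (y t)) = snd (y t) * ph t"
        using F_eq[of "fst (y t)" "snd (y t)"] by (simp add: ph_def)
      have e: "((\<lambda>t. exp (- I t)) has_real_derivative exp (- I t) * (- ph t)) (at t within {0..T})"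
        using DERIV_chain2[OF DERIV_exp DERIV_minus[OF dI]] by simp
      have "(Q has_real_derivative (snd (F (y t)) * exp (- I t) + exp (- I t) * (- ph t) * snd (y t))) (at t within {0..T})"
        unfolding Q_def by (rule DERIV_mult[OF dP e])
      moreover have "snd (F (y t)) * exp (- I t) + exp (- I t) * (- ph t) * snd (y t) = 0"
        unfolding sF by (simp add: algebra_simps)
      ultimately show ?thesis by simp
    qed
    obtain cQ where cQ: "\<forall>t\<in>{0..T}. Q t = cQ"
      using has_field_derivative_zero_constant[of "{0..T}" Q] dQ by auto
    have Q0: "Q 0 = P0" by (simp add: Q_def I_def y0)
    have QT: "Q T = P0" using cQ T0 Q0 by force
    have PT: "snd (y T) = P0 * exp (I T)"
      using QT unfolding Q_def by (simp add: exp_minus field_simps)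
    have IT: "\<mu> * T \<le> I T"
    proof -
      have "integral {0..T} (\<lambda>_. \<mu>) \<le> integral {0..T} ph"
        by (rule integral_le) (use cph phmu in \<open>auto intro: integrable_continuous_interval\<close>)
      then show ?thesis using T0 by (simp add: I_def mult.commute)
    qed
    have "\<rho> \<le> snd (y T)"
    proof -
      have "P0 * exp (\<mu> * T) \<le> P0 * exp (I T)" using IT P0 by simp
      then show ?thesis using eT PT by simp
    qed
    moreover have "\<bar>snd (y T)\<bar> \<le> f T" using dist_comp[of "y T" N1] by (simp add: f_def)
    moreover have "f T < \<rho>" using small T0 by auto
    ultimately show False by linarith
  qed
qed

end

context ppsys begin

lemma F_expl: "F = (\<lambda>z. (r * fst z * (1 - fst z / K - h / (w + fst z)) - a * fst z * snd z / (b + (fst z)^2),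
      c * fst z * snd z / (b + (fst z)^2) - \<delta> * snd z))"
  by (simp add: pp_field_def fun_eq_iff case_prod_beta)

lemma A_neg: "r * N1 * (h / (w + N1)^2 - 1 / K) < 0"
proof -
  have N1p: "0 < N1" by (rule N1_pos)
  have wN: "0 < w + N1" using N1p pos by simp
  have hw1: "h / (w + N1) = (K - N1) / K" using g_N1 pos by (simp add: field_simps)
  have "2 * N1 = K - w + sqrt ((K - w)^2 - 4 * K * (h - w))" unfolding N1f_def by simp
  then have 2: "K - w < 2 * N1" using sqD wK by linarith
  have "h / (w + N1)^2 = (h / (w + N1)) / (w + N1)" by (simp add: power2_eq_square)
  also have "\<dots> = ((K - N1) / K) / (w + N1)" by (simp only: hw1)
  also have "\<dots> = (K - N1) / (K * (w + N1))" by simp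
  finally have "h / (w + N1)^2 = (K - N1) / (K * (w + N1))" .
  also have "\<dots> < (w + N1) / (K * (w + N1))"
    by (rule divide_strict_right_mono) (use 2 wN pos in auto)
  also have "\<dots> = 1 / K" using wN by simp
  finally have "h / (w + N1)^2 - 1 / K < 0" by simp
  then show ?thesis using N1p pos by (simp add: mult_pos_neg)
qed

lemma F_deriv:
  "(F has_derivative (\<lambda>z. (r * N1 * (h / (w + N1)^2 - 1 / K) * fst z + (- (a * N1 / (b + N1^2))) * snd z,
      phi N1 * snd z))) (at (N1, 0))"
proof -
  have wN: "w + N1 \<noteq> 0" using N1_pos pos by simp
  have bN: "b + N1^2 \<noteq> 0" using pos by (metis add_pos_nonneg zero_le_power2 less_irrefl)
  have K0: "K \<noteq> 0" using pos by simp
  show ?thesis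
    unfolding F_expl
    apply (intro derivative_eq_intros)
    using wN bN K0 apply simp_all
    using wN bN K0 g_N1 apply (simp_all add: fun_eq_iff phif_def)
    using wN bN K0 apply (simp_all add: power2_eq_square field_simps)
    done
qed

lemma saddle_part:
  assumes pp: "0 < phi N1"
  shows "is_saddle F (N1, 0)"
proof -
  define A where "A = r * N1 * (h / (w + N1)^2 - 1 / K)"
  define B where "B = - (a * N1 / (b + N1^2))"
  define J where "J = (\<lambda>z::real\<times>real. (A * fst z + B * snd z, phi N1 * snd z))"
  have A0: "A < 0" unfolding A_def by (rule A_neg)
  have D: "(F has_derivative J) (at (N1, 0))" unfolding J_def A_def B_def by (rule F_deriv)
  have e1: "J (1, 0) = A *\<^sub>R (1, 0)" by (simp add: J_def)
  have e2: "J (B, phi N1 - A) = phi N1 *\<^sub>R (B, phi N1 - A)"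
    by (simp add: J_def algebra_simps)
  have nz: "(B, phi N1 - A) \<noteq> 0" using A0 pp by (simp add: zero_prod_def)
  have nz1: "(1::real, 0::real) \<noteq> 0" by (simp add: zero_prod_def)
  have ex: "\<exists>l1 l2 v1 v2. l1 < 0 \<and> 0 < l2 \<and> v1 \<noteq> 0 \<and> v2 \<noteq> 0 \<and> J v1 = l1 *\<^sub>R v1 \<and> J v2 = l2 *\<^sub>R v2"
    using A0 pp e1 e2 nz nz1 by blast
  show ?thesis unfolding is_saddle_def using F_E D ex by blast
qed

end

theorem theorem5:
  fixes r K h w a b c \<delta> :: real
  assumes "0 < r" "0 < K" "0 < h" "0 < w" "0 < a" "0 < b" "0 < c" "0 < \<delta>"
    and "w < K" and "h < w"
  defines "N1 \<equiv> ((K - w) + sqrt ((K - w)^2 - 4 * K * (h - w))) / 2"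
  shows "(c < \<delta> * (b + N1^2) / N1 \<longrightarrow>
            locally_asymptotically_stable (pp_field r K h w a b c \<delta>) (N1, 0))
       \<and> (c > \<delta> * (b + N1^2) / N1 \<longrightarrow>
            \<not> lyapunov_stable (pp_field r K h w a b c \<delta>) (N1, 0)
            \<and> is_saddle (pp_field r K h w a b c \<delta>) (N1, 0))"
proof -
  have L: "ppsys r K h w a b c \<delta>" unfolding ppsys_def using assms(1-10) by auto
  have e: "N1 = N1f K w h" unfolding N1_def N1f_def ..
  have Np: "0 < N1" unfolding e by (rule ppsys.N1_pos[OF L])
  have bN: "0 < b + N1^2" using assms(6) by (simp add: add_pos_nonneg)
  have iff1: "c < \<delta> * (b + N1^2) / N1 \<longleftrightarrow> phif b c \<delta> N1 < 0"
  proof -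
    have "c < \<delta> * (b + N1^2) / N1 \<longleftrightarrow> c * N1 < \<delta> * (b + N1^2)" using Np by (simp add: less_divide_eq)
    also have "\<dots> \<longleftrightarrow> c * N1 / (b + N1^2) < \<delta>" using bN by (simp add: divide_less_eq)
    finally show ?thesis by (simp add: phif_def)
  qed
  have iff2: "c > \<delta> * (b + N1^2) / N1 \<longleftrightarrow> 0 < phif b c \<delta> N1"
  proof -
    have "c > \<delta> * (b + N1^2) / N1 \<longleftrightarrow> c * N1 > \<delta> * (b + N1^2)" using Np by (simp add: divide_less_eq)
    also have "\<dots> \<longleftrightarrow> c * N1 / (b + N1^2) > \<delta>" using bN by (simp add: less_divide_eq)
    finally show ?thesis by (simp add: phif_def)
  qed
  show ?thesis
    unfolding iff1 iff2 unfolding e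
    using ppsys.stable_part[OF L] ppsys.unstable_part[OF L] ppsys.saddle_part[OF L] by blast
qed

end
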